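(* Let $1\le r\le n$ and let $p=(p_1,\dots,p_n)$ be a size vector. If $A,B\subseteq S_p$ form a maximal pair of $r$-cross-intersecting families, then each of $A$, $B$ determines the other; in particular $A$ and $B$ have the same set of relevant coordinates. Moreover, if $A$ is the Hamming ball of radius $l$ around $x_0\in S_p$ in a set of coordinates $T\subseteq[n]$, then $|T|\ge l+r$, $B$ is the Hamming ball of radius $|T|-l-r$ around $x_0$ in the coordinates $T$, $p_i\le p_j$ holds for every $i\in T$ and $j\in[n]\setminus T$, and $\big||T|-2l-r\big|\le 1$.
   Context: $[m]=\{1,\dots,m\}$. A size vector is a sequence of integers $p=(p_1,\dots,p_n)$ with $p_i\ge 2$ for all $i$; $S_p=[p_1]\times\cdots\times[p_n]$. Two vectors $x,y\in S_p$ are $r$-intersecting if $|\{i: x_i=y_i\}|\ge r$; families $A,B\subseteq S_p$ are $r$-cross-intersecting if every $x\in A$, $y\in B$ are $r$-intersecting. A pair $(A,B)$ of $r$-cross-intersecting families in $S_p$ is maximal if it maximizes $|A|\cdot|B|$ among all $r$-cross-intersecting pairs in $S_p$. A coordinate $i$ is irrelevant for $A\subseteq S_p$ if whenever two elements of $S_p$ differ only in coordinate $i$ and one lies in $A$, so does the other; otherwise $i$ is relevant for $A$. For $T\subseteq[n]$, $x_0\in S_p$ and $0\le k\le |T|$, the Hamming ball of radius $k$ around $x_0$ in the coordinates $T$ is $\{x\in S_p: |\{i\in T: x_i\ne (x_0)_i\}|\le k\}$. *)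

theory Defs
  imports "HOL-Library.FuncSet"
begin

text \<open>Vectors of S_p are functions nat => nat, restricted (PiE) to coordinates 1..n,
  with x i in {1..p i}. The size vector p is a function nat => nat, only its values
  on 1..n matter.\<close>

definition Sp :: "nat \<Rightarrow> (nat \<Rightarrow> nat) \<Rightarrow> (nat \<Rightarrow> nat) set" where
  "Sp n p = PiE {1..n} (\<lambda>i. {1..p i})"

definition size_vector :: "nat \<Rightarrow> (nat \<Rightarrow> nat) \<Rightarrow> bool" where
  "size_vector n p \<longleftrightarrow> (\<forall>i\<in>{1..n}. p i \<ge> 2)"

definition r_intersecting :: "nat \<Rightarrow> nat \<Rightarrow> (nat \<Rightarrow> nat) \<Rightarrow> (nat \<Rightarrow> nat) \<Rightarrow> bool" where
  "r_intersecting n r x y \<longleftrightarrow> card {i\<in>{1..n}. x i = y i} \<ge> r"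

definition r_cross_intersecting ::
  "nat \<Rightarrow> nat \<Rightarrow> (nat \<Rightarrow> nat) set \<Rightarrow> (nat \<Rightarrow> nat) set \<Rightarrow> bool" where
  "r_cross_intersecting n r A B \<longleftrightarrow> (\<forall>x\<in>A. \<forall>y\<in>B. r_intersecting n r x y)"

definition maximal_pair ::
  "nat \<Rightarrow> (nat \<Rightarrow> nat) \<Rightarrow> nat \<Rightarrow> (nat \<Rightarrow> nat) set \<Rightarrow> (nat \<Rightarrow> nat) set \<Rightarrow> bool" where
  "maximal_pair n p r A B \<longleftrightarrow>
     A \<subseteq> Sp n p \<and> B \<subseteq> Sp n p \<and> r_cross_intersecting n r A B \<and>
     (\<forall>A' B'. A' \<subseteq> Sp n p \<longrightarrow> B' \<subseteq> Sp n p \<longrightarrow> r_cross_intersecting n r A' B' \<longrightarrow>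
        card A' * card B' \<le> card A * card B)"

definition irrelevant_coord ::
  "nat \<Rightarrow> (nat \<Rightarrow> nat) \<Rightarrow> (nat \<Rightarrow> nat) set \<Rightarrow> nat \<Rightarrow> bool" where
  "irrelevant_coord n p A i \<longleftrightarrow>
     (\<forall>x\<in>Sp n p. \<forall>y\<in>Sp n p. (\<forall>j\<in>{1..n}. j \<noteq> i \<longrightarrow> x j = y j) \<longrightarrow> x \<in> A \<longrightarrow> y \<in> A)"

definition relevant_coords ::
  "nat \<Rightarrow> (nat \<Rightarrow> nat) \<Rightarrow> (nat \<Rightarrow> nat) set \<Rightarrow> nat set" where
  "relevant_coords n p A = {i\<in>{1..n}. \<not> irrelevant_coord n p A i}"

definition hamming_ball ::
  "nat \<Rightarrow> (nat \<Rightarrow> nat) \<Rightarrow> nat set \<Rightarrow> (nat \<Rightarrow> nat) \<Rightarrow> nat \<Rightarrow> (nat \<Rightarrow> nat) set" where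
  "hamming_ball n p T x0 k = {x\<in>Sp n p. card {i\<in>T. x i \<noteq> x0 i} \<le> k}"

end

theory Submission
  imports Defs Complex_Main
begin


definition oth :: "nat \<Rightarrow> nat" where "oth v = (if v = 1 then 2 else 1)"

definition NB :: "nat \<Rightarrow> nat \<Rightarrow> (nat\<Rightarrow>nat) \<Rightarrow> (nat\<Rightarrow>nat) set \<Rightarrow> (nat\<Rightarrow>nat) set" where
  "NB n r p A = {y\<in>Sp n p. \<forall>x\<in>A. r_intersecting n r x y}"

lemma oth: "v \<in> {1..m} \<Longrightarrow> 2 \<le> m \<Longrightarrow> oth v \<in> {1..m} \<and> oth v \<noteq> v"
  by (auto simp: oth_def)

lemma Sp_finite: "finite (Sp n p)"
  unfolding Sp_def by (simp add: finite_PiE)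

lemma ri_sym: "r_intersecting n r x y = r_intersecting n r y x"
proof -
  have "{i\<in>{1..n}. x i = y i} = {i\<in>{1..n}. y i = x i}" by auto
  thus ?thesis unfolding r_intersecting_def by simp
qed

lemma Sp_ne: "restrict (\<lambda>i. 1) {1..n} \<in> Sp n p" if "size_vector n p"
  using that unfolding Sp_def size_vector_def by auto

lemma self_int: "r \<le> n \<Longrightarrow> r_intersecting n r x x"
proof -
  assume "r \<le> n"
  have "{i\<in>{1..n}. x i = x i} = {1..n}" by auto
  thus ?thesis unfolding r_intersecting_def using \<open>r \<le> n\<close> by simp
qed

lemma maxD: "maximal_pair n p r A B \<Longrightarrow> A' \<subseteq> Sp n p \<Longrightarrow> B' \<subseteq> Sp n p \<Longrightarrow>
   r_cross_intersecting n r A' B' \<Longrightarrow> card A' * card B' \<le> card A * card B"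
  unfolding maximal_pair_def by simp

lemma max_pos:
  assumes "maximal_pair n p r A B" "size_vector n p" "r \<le> n"
  shows "1 \<le> card A * card B"
proof -
  let ?x = "restrict (\<lambda>i. 1) {1..n}"
  have "?x \<in> Sp n p" using Sp_ne assms(2) .
  moreover have "r_cross_intersecting n r {?x} {?x}"
    using self_int[OF assms(3)] unfolding r_cross_intersecting_def by auto
  ultimately have "card {?x} * card {?x} \<le> card A * card B"
    using maxD[OF assms(1), of "{?x}" "{?x}"] by simp
  thus ?thesis by simp
qed

lemma rci_sym: "r_cross_intersecting n r A B = r_cross_intersecting n r B A"
  unfolding r_cross_intersecting_def using ri_sym by blast

lemma max_sym: "maximal_pair n p r A B \<Longrightarrow> maximal_pair n p r B A"
  unfolding maximal_pair_def
proof (elim conjE, intro conjI allI impI)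
  fix A' B' assume H: "\<forall>A' B'. A' \<subseteq> Sp n p \<longrightarrow> B' \<subseteq> Sp n p \<longrightarrow> r_cross_intersecting n r A' B' \<longrightarrow>
        card A' * card B' \<le> card A * card B"
    and "A' \<subseteq> Sp n p" "B' \<subseteq> Sp n p" "r_cross_intersecting n r A' B'"
  hence "card B' * card A' \<le> card A * card B" using H[rule_format, of B' A'] rci_sym by simp
  thus "card A' * card B' \<le> card B * card A" by (simp add: mult.commute)
qed (auto simp: rci_sym)

lemma max_N:
  assumes "maximal_pair n p r A B" "size_vector n p" "r \<le> n"
  shows "B = NB n r p A"
proof -
  have pos: "1 \<le> card A * card B" using max_pos assms .
  have sub: "B \<subseteq> NB n r p A" using assms(1) unfolding maximal_pair_def NB_def r_cross_intersecting_def by auto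
  have "NB n r p A \<subseteq> Sp n p" "A \<subseteq> Sp n p" using assms(1) unfolding NB_def maximal_pair_def by auto
  moreover have "r_cross_intersecting n r A (NB n r p A)" unfolding NB_def r_cross_intersecting_def by auto
  ultimately have "card A * card (NB n r p A) \<le> card A * card B" using maxD[OF assms(1), of A "NB n r p A"] by simp
  moreover have "card A > 0" using pos by (cases "card A") auto
  ultimately have "card (NB n r p A) \<le> card B" by simp
  moreover have "finite (NB n r p A)" using Sp_finite unfolding NB_def by auto
  ultimately show ?thesis using sub by (meson card_seteq)
qed

lemma irr_N:
  assumes "A \<subseteq> Sp n p" "size_vector n p" "i \<in> {1..n}" "irrelevant_coord n p A i"
  shows "irrelevant_coord n p (NB n r p A) i"
  unfolding irrelevant_coord_def
proof (intro ballI impI)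
  fix y y' assume y: "y \<in> Sp n p" and y': "y' \<in> Sp n p" and ag: "\<forall>j\<in>{1..n}. j \<noteq> i \<longrightarrow> y j = y' j"
    and yN: "y \<in> NB n r p A"
  show "y' \<in> NB n r p A" unfolding NB_def
  proof (intro CollectI conjI ballI y')
    fix x assume xA: "x \<in> A"
    define x'' where "x'' = x(i := oth (y i))"
    have xS: "x \<in> Sp n p" using xA assms(1) by auto
    have yi: "y i \<in> {1..p i}" using y assms(3) unfolding Sp_def by auto
    have o: "oth (y i) \<in> {1..p i} \<and> oth (y i) \<noteq> y i" using oth[OF yi] assms(2,3) unfolding size_vector_def by auto
    have x''S: "x'' \<in> Sp n p" using PiE_fun_upd[of "oth (y i)" "\<lambda>i. {1..p i}" i x "{1..n}"] xS o assms(3)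
      unfolding Sp_def x''_def by (simp add: insert_absorb)
    have agx: "\<And>j. j\<in>{1..n} \<Longrightarrow> j \<noteq> i \<Longrightarrow> x j = x'' j" by (simp add: x''_def)
    have "x'' \<in> A" using assms(4)[unfolded irrelevant_coord_def, rule_format, OF xS x''S agx xA] .
    hence "r_intersecting n r x'' y" using yN unfolding NB_def by auto
    moreover have "{j\<in>{1..n}. x'' j = y j} \<subseteq> {j\<in>{1..n}. x j = y' j}"
      using ag o unfolding x''_def by auto
    hence "card {j\<in>{1..n}. x'' j = y j} \<le> card {j\<in>{1..n}. x j = y' j}"
      by (intro card_mono) auto
    ultimately show "r_intersecting n r x y'" unfolding r_intersecting_def by linarith
  qed
qed



lemma card_split_T:
  assumes "finite T"
  shows "card {i\<in>T. Q i} + card {i\<in>T. \<not> Q i} = card T"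
proof -
  have "{i\<in>T. Q i} \<union> {i\<in>T. \<not> Q i} = T" "{i\<in>T. Q i} \<inter> {i\<in>T. \<not> Q i} = {}" by auto
  thus ?thesis using card_Un_disjoint[of "{i\<in>T. Q i}" "{i\<in>T. \<not> Q i}"] assms by auto
qed

lemma ball_int:
  assumes T: "T \<subseteq> {1..n}" and x: "card {i\<in>T. x i \<noteq> x0 i} \<le> l"
    and y: "card {i\<in>T. y i \<noteq> x0 i} \<le> m" and lm: "l + m + r \<le> card T"
  shows "r_intersecting n r x y"
proof -
  have fT: "finite T" using T finite_subset by blast
  have "{i\<in>T. y i = x0 i} \<subseteq> {i\<in>{1..n}. x i = y i} \<union> {i\<in>T. x i \<noteq> x0 i}" using T by auto
  hence "card {i\<in>T. y i = x0 i} \<le> card ({i\<in>{1..n}. x i = y i} \<union> {i\<in>T. x i \<noteq> x0 i})"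
    using fT by (intro card_mono) auto
  also have "\<dots> \<le> card {i\<in>{1..n}. x i = y i} + card {i\<in>T. x i \<noteq> x0 i}" by (rule card_Un_le)
  finally have 1: "card {i\<in>T. y i = x0 i} \<le> card {i\<in>{1..n}. x i = y i} + l" using x by linarith
  have "card {i\<in>T. y i = x0 i} + card {i\<in>T. y i \<noteq> x0 i} = card T" using card_split_T[OF fT] .
  thus ?thesis unfolding r_intersecting_def using 1 y lm by linarith
qed

lemma N_ball:
  assumes T: "T \<subseteq> {1..n}" and x0: "x0 \<in> Sp n p" and sv: "size_vector n p" and r: "1 \<le> r"
    and y: "y \<in> Sp n p"
    and all: "\<forall>x\<in>hamming_ball n p T x0 l. r_intersecting n r x y"
  shows "card {i\<in>T. y i \<noteq> x0 i} + l + r \<le> card T"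
proof (rule ccontr)
  assume contra: "\<not> ?thesis"
  have fT: "finite T" using T finite_subset by blast
  define Y where "Y = {i\<in>T. y i = x0 i}"
  have cY: "card Y + card {i\<in>T. y i \<noteq> x0 i} = card T" unfolding Y_def using card_split_T[OF fT] .
  have fY: "finite Y" unfolding Y_def using fT by auto
  obtain L where L: "L \<subseteq> Y" "card L = min l (card Y)"
    using obtain_subset_with_card_n[of "min l (card Y)" Y] by auto
  have fL: "finite L" using L fY finite_subset by blast
  define x where "x = restrict (\<lambda>i. if i \<in> L \<or> i \<notin> T then oth (y i) else x0 i) {1..n}"
  have yi: "\<And>i. i \<in> {1..n} \<Longrightarrow> y i \<in> {1..p i}" using y unfolding Sp_def by auto
  have x0i: "\<And>i. i \<in> {1..n} \<Longrightarrow> x0 i \<in> {1..p i}" using x0 unfolding Sp_def by auto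
  have o: "\<And>i. i \<in> {1..n} \<Longrightarrow> oth (y i) \<in> {1..p i} \<and> oth (y i) \<noteq> y i"
    using oth yi sv unfolding size_vector_def by blast
  have xS: "x \<in> Sp n p" unfolding Sp_def x_def using o x0i by auto
  have LT: "L \<subseteq> T" using L unfolding Y_def by auto
  have "{i\<in>T. x i \<noteq> x0 i} = L"
  proof (intro equalityI subsetI)
    fix i assume "i \<in> {i\<in>T. x i \<noteq> x0 i}" thus "i \<in> L" using T unfolding x_def by (auto split: if_splits)
  next
    fix i assume iL: "i \<in> L"
    hence "i \<in> T" "y i = x0 i" using L unfolding Y_def by auto
    thus "i \<in> {i\<in>T. x i \<noteq> x0 i}" using o[of i] T iL unfolding x_def by auto
  qed
  hence "x \<in> hamming_ball n p T x0 l" unfolding hamming_ball_def using xS L by auto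
  hence ri: "r \<le> card {i\<in>{1..n}. x i = y i}" using all unfolding r_intersecting_def by auto
  have "{i\<in>{1..n}. x i = y i} \<subseteq> Y - L" unfolding Y_def x_def using o by auto
  hence "card {i\<in>{1..n}. x i = y i} \<le> card (Y - L)" using fY by (intro card_mono) auto
  also have "\<dots> = card Y - card L" using L fL by (simp add: card_Diff_subset)
  finally show False using ri L cY contra r by linarith
qed



definition EE :: "(nat\<Rightarrow>nat) \<Rightarrow> nat set \<Rightarrow> nat \<Rightarrow> nat" where
  "EE p T k = (\<Sum>S\<in>{S. S\<subseteq>T \<and> card S \<le> k}. \<Prod>i\<in>S. (p i - 1))"

lemma card_piece:
  assumes T: "T \<subseteq> {1..n}" and x0: "x0 \<in> Sp n p" and S: "S \<subseteq> T"
  shows "card {x\<in>Sp n p. {i\<in>T. x i \<noteq> x0 i} = S} = (\<Prod>i\<in>S. (p i - 1)) * (\<Prod>i\<in>{1..n}-T. p i)"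
proof -
  define F where "F i = (if i \<in> S then {1..p i} - {x0 i} else if i \<in> T then {x0 i} else {1..p i})" for i
  have x0i: "\<And>i. i \<in> {1..n} \<Longrightarrow> x0 i \<in> {1..p i}" using x0 unfolding Sp_def by auto
  have eq: "{x\<in>Sp n p. {i\<in>T. x i \<noteq> x0 i} = S} = PiE {1..n} F"
  proof (intro equalityI subsetI)
    fix x assume "x \<in> {x\<in>Sp n p. {i\<in>T. x i \<noteq> x0 i} = S}"
    hence xS: "x \<in> Sp n p" and D: "{i\<in>T. x i \<noteq> x0 i} = S" by auto
    show "x \<in> PiE {1..n} F"
      unfolding PiE_iff
    proof (intro conjI ballI)
      fix i assume i: "i \<in> {1..n}"
      have "x i \<in> {1..p i}" using xS i unfolding Sp_def by auto
      thus "x i \<in> F i" using D S unfolding F_def by auto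
    next
      show "x \<in> extensional {1..n}" using xS unfolding Sp_def by (simp add: PiE_iff)
    qed
  next
    fix x assume x: "x \<in> PiE {1..n} F"
    have "x \<in> Sp n p" unfolding Sp_def using x x0i unfolding F_def PiE_iff by (auto split: if_splits)
    moreover have "{i\<in>T. x i \<noteq> x0 i} = S"
    proof (intro equalityI subsetI)
      fix i assume "i \<in> {i\<in>T. x i \<noteq> x0 i}"
      thus "i \<in> S" using x T unfolding F_def PiE_iff by (auto split: if_splits)
    next
      fix i assume "i \<in> S"
      thus "i \<in> {i\<in>T. x i \<noteq> x0 i}" using x T S unfolding F_def PiE_iff by (auto split: if_splits)
    qed
    ultimately show "x \<in> {x\<in>Sp n p. {i\<in>T. x i \<noteq> x0 i} = S}" by simp
  qed
  define g where "g i = card (F i)" for i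
  have gS: "\<And>i. i \<in> S \<Longrightarrow> g i = p i - 1" unfolding g_def F_def using x0i S T by auto
  have gTS: "\<And>i. i \<in> T - S \<Longrightarrow> g i = 1" unfolding g_def F_def by auto
  have gO: "\<And>i. i \<in> {1..n} - T \<Longrightarrow> g i = p i" unfolding g_def F_def using S by auto
  have fT: "finite T" using T finite_subset by blast
  have "card (PiE {1..n} F) = (\<Prod>i\<in>{1..n}. g i)" unfolding g_def by (simp add: card_PiE)
  also have "\<dots> = (\<Prod>i\<in>{1..n}-T. g i) * (\<Prod>i\<in>T. g i)" using prod.subset_diff[OF T] by simp
  also have "(\<Prod>i\<in>T. g i) = (\<Prod>i\<in>T-S. g i) * (\<Prod>i\<in>S. g i)" using prod.subset_diff[OF S fT] by simp
  also have "(\<Prod>i\<in>T-S. g i) = 1" using gTS by simp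
  also have "(\<Prod>i\<in>S. g i) = (\<Prod>i\<in>S. (p i - 1))" using gS by simp
  also have "(\<Prod>i\<in>{1..n}-T. g i) = (\<Prod>i\<in>{1..n}-T. p i)" using gO by simp
  finally show ?thesis using eq by simp
qed

lemma card_ball:
  assumes T: "T \<subseteq> {1..n}" and x0: "x0 \<in> Sp n p"
  shows "card (hamming_ball n p T x0 k) = EE p T k * (\<Prod>i\<in>{1..n}-T. p i)"
proof -
  have fT: "finite T" using T finite_subset by blast
  define I where "I = {S. S\<subseteq>T \<and> card S \<le> k}"
  define C where "C S = {x\<in>Sp n p. {i\<in>T. x i \<noteq> x0 i} = S}" for S
  have fI: "finite I" unfolding I_def using fT by simp
  have eq: "hamming_ball n p T x0 k = (\<Union>S\<in>I. C S)"
    unfolding hamming_ball_def I_def C_def by auto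
  have "card (\<Union>S\<in>I. C S) = (\<Sum>S\<in>I. card (C S))"
    using fI by (intro card_UN_disjoint) (auto simp: C_def intro: finite_subset[OF _ Sp_finite])
  also have "\<dots> = (\<Sum>S\<in>I. (\<Prod>i\<in>S. (p i - 1)) * (\<Prod>i\<in>{1..n}-T. p i))"
    using card_piece[OF T x0] unfolding C_def I_def by (intro sum.cong) auto
  also have "\<dots> = EE p T k * (\<Prod>i\<in>{1..n}-T. p i)"
    unfolding EE_def I_def by (simp add: sum_distrib_right)
  finally show ?thesis using eq by simp
qed

lemma EE_0: "finite T \<Longrightarrow> EE p T 0 = 1"
proof -
  assume "finite T"
  hence "{S. S\<subseteq>T \<and> card S \<le> 0} = {{}}" using finite_subset by (fastforce simp: card_eq_0_iff)
  thus ?thesis unfolding EE_def by simp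
qed

lemma EE_empty: "EE p {} k = 1"
proof -
  have e: "{S. S\<subseteq>{} \<and> card S \<le> k} = {{}}" by auto
  show ?thesis unfolding EE_def e by simp
qed

lemma EE_insert:
  assumes R: "finite R" and i: "i \<notin> R"
  shows "EE p (insert i R) (Suc k) = EE p R (Suc k) + (p i - 1) * EE p R k"
proof -
  define I1 where "I1 = {S. S\<subseteq>R \<and> card S \<le> Suc k}"
  define I2 where "I2 = {S. S\<subseteq>R \<and> card S \<le> k}"
  have split: "{S. S\<subseteq>insert i R \<and> card S \<le> Suc k} = I1 \<union> insert i ` I2"
  proof (intro equalityI subsetI)
    fix S assume S: "S \<in> {S. S\<subseteq>insert i R \<and> card S \<le> Suc k}"
    show "S \<in> I1 \<union> insert i ` I2"
    proof (cases "i \<in> S")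
      case True
      have fS: "finite S" using S R by (auto intro: finite_subset)
      have "S = insert i (S - {i})" using True by auto
      moreover have "S - {i} \<in> I2" using S True fS unfolding I2_def by (auto simp: card_Diff_singleton)
      ultimately show ?thesis by blast
    next
      case False thus ?thesis using S unfolding I1_def by auto
    qed
  next
    fix S assume "S \<in> I1 \<union> insert i ` I2"
    thus "S \<in> {S. S\<subseteq>insert i R \<and> card S \<le> Suc k}" unfolding I1_def I2_def
      using R by (auto intro: finite_subset card_insert_le_m1)
  qed
  have fI1: "finite I1" "finite I2" unfolding I1_def I2_def using R by auto
  have disj: "I1 \<inter> insert i ` I2 = {}" unfolding I1_def I2_def using i by auto
  have inj: "inj_on (insert i) I2" unfolding I2_def inj_on_def using i by (metis (mono_tags) insert_ident mem_Collect_eq subsetD)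
  have "EE p (insert i R) (Suc k) = (\<Sum>S\<in>I1. \<Prod>j\<in>S. (p j - 1)) + (\<Sum>S\<in>insert i ` I2. \<Prod>j\<in>S. (p j - 1))"
    unfolding EE_def split using fI1 disj by (simp add: sum.union_disjoint)
  also have "(\<Sum>S\<in>insert i ` I2. \<Prod>j\<in>S. (p j - 1)) = (\<Sum>S\<in>I2. \<Prod>j\<in>insert i S. (p j - 1))"
    using sum.reindex[OF inj] by simp
  also have "\<dots> = (\<Sum>S\<in>I2. (p i - 1) * (\<Prod>j\<in>S. (p j - 1)))"
    using R i unfolding I2_def
    by (intro sum.cong refl) (metis (no_types, lifting) mem_Collect_eq prod.insert rev_finite_subset subsetD)
  also have "\<dots> = (p i - 1) * EE p R k" unfolding EE_def I2_def by (simp add: sum_distrib_left)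
  finally show ?thesis unfolding EE_def I1_def by simp
qed

lemma EE_pos:
  assumes "finite T" "T \<subseteq> {1..n}" "size_vector n p"
  shows "1 \<le> EE p T k"
proof -
  have "(\<Sum>S\<in>{{}}. \<Prod>i\<in>S. (p i - 1)) \<le> EE p T k"
    unfolding EE_def using assms(1) by (intro sum_mono2) auto
  thus ?thesis by simp
qed

lemma prod_pos1:
  assumes "S \<subseteq> {1..n}" "size_vector n p"
  shows "1 \<le> (\<Prod>i\<in>S. (p i - 1))"
proof -
  have "\<forall>i\<in>S. 1 \<le> p i - 1" using assms unfolding size_vector_def by force
  thus ?thesis by (metis prod_ge_1)
qed

lemma EE_strict:
  assumes fT: "finite T" and T: "T \<subseteq> {1..n}" and sv: "size_vector n p" and k: "Suc k \<le> card T"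
  shows "EE p T k < EE p T (Suc k)"
proof -
  obtain S0 where S0: "S0 \<subseteq> T" "card S0 = Suc k" using obtain_subset_with_card_n[OF k] by auto
  have sub: "{S. S\<subseteq>T \<and> card S \<le> k} \<subseteq> {S. S\<subseteq>T \<and> card S \<le> Suc k}" by auto
  have fin: "finite {S. S\<subseteq>T \<and> card S \<le> Suc k}" using fT by simp
  have "EE p T (Suc k) = (\<Sum>S\<in>{S. S\<subseteq>T \<and> card S \<le> Suc k} - {S. S\<subseteq>T \<and> card S \<le> k}. \<Prod>i\<in>S. (p i - 1)) + EE p T k"
    unfolding EE_def using sum.subset_diff[OF sub fin] by simp
  moreover have "(\<Sum>S\<in>{S0}. \<Prod>i\<in>S. (p i - 1)) \<le> (\<Sum>S\<in>{S. S\<subseteq>T \<and> card S \<le> Suc k} - {S. S\<subseteq>T \<and> card S \<le> k}. \<Prod>i\<in>S. (p i - 1))"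
    using S0 fin by (intro sum_mono2) auto
  moreover have "1 \<le> (\<Prod>i\<in>S0. (p i - 1))" using prod_pos1[OF _ sv, of S0] S0 T by auto
  ultimately show ?thesis by simp
qed



lemma step_ineq:
  fixes B0 B1 B2 B3 q :: real
  assumes pos: "B0 > 0" "B1 > 0" "B2 > 0" "B3 > 0" "q \<ge> 1"
    and D1: "B0 * B2 \<le> B1^2" and D2: "B1 * B3 \<le> B2^2"
  shows "(B1 + q*B0) * (B3 + q*B2) \<le> (B2 + q*B1)^2"
    and "B0 * B2 < B1^2 \<Longrightarrow> (B1 + q*B0) * (B3 + q*B2) < (B2 + q*B1)^2"
proof -
  have "(B0*B2) * (B1*B3) \<le> B1^2 * B2^2"
    using D1 D2 pos by (intro mult_mono) auto
  hence "(B0*B3) * (B1*B2) \<le> (B1*B2) * (B1*B2)" by (simp add: algebra_simps power2_eq_square)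
  hence M: "B0*B3 \<le> B1*B2" using pos by (meson mult_le_cancel_right_pos mult_pos_pos)
  have id: "(B2 + q*B1)^2 - (B1 + q*B0) * (B3 + q*B2) = (B2^2 - B1*B3) + q*(B1*B2 - B0*B3) + q^2*(B1^2 - B0*B2)"
    by (simp add: algebra_simps power2_eq_square)
  have t1: "0 \<le> B2^2 - B1*B3" using D2 by simp
  have t2: "0 \<le> q*(B1*B2 - B0*B3)" using M pos by simp
  have t3: "0 \<le> q^2*(B1^2 - B0*B2)" using D1 by simp
  show "(B1 + q*B0) * (B3 + q*B2) \<le> (B2 + q*B1)^2" using id t1 t2 t3 by linarith
  assume S: "B0 * B2 < B1^2"
  have "0 < q^2*(B1^2 - B0*B2)" using S pos by simp
  thus "(B1 + q*B0) * (B3 + q*B2) < (B2 + q*B1)^2" using id t1 t2 by linarith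
qed

lemma step0:
  fixes b1 b2 q :: real
  assumes "b1 \<ge> 1" "q \<ge> 1" "b2 \<le> b1^2"
  shows "b2 + q*b1 < (b1 + q)^2"
proof -
  have "(b1 + q)^2 = b1^2 + 2*q*b1 + q^2" by (simp add: algebra_simps power2_eq_square)
  moreover have "1*1 \<le> q*b1" using assms by (intro mult_mono) auto
  moreover have "q^2 > 0" using assms by simp
  ultimately show ?thesis using assms by linarith
qed

lemma LC:
  assumes "finite T" "T \<subseteq> {1..n}" "size_vector n p"
  shows "\<forall>k. real (EE p T k) * real (EE p T (Suc (Suc k))) \<le> (real (EE p T (Suc k)))^2
           \<and> (Suc k < card T \<longrightarrow> real (EE p T k) * real (EE p T (Suc (Suc k))) < (real (EE p T (Suc k)))^2)"
  using assms
proof (induction T rule: finite_induct)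
  case empty
  then show ?case by (simp add: EE_empty)
next
  case (insert i R)
  have R: "R \<subseteq> {1..n}" using insert by auto
  note IH = insert.IH[OF R insert.prems(2)]
  define b where "b k = real (EE p R k)" for k
  define c where "c k = real (EE p (insert i R) k)" for k
  define q where "q = real (p i - 1)"
  have q1: "q \<ge> 1" using insert.prems unfolding q_def size_vector_def by force
  have cS: "\<And>k. c (Suc k) = b (Suc k) + q * b k" unfolding b_def c_def q_def
    using EE_insert[OF insert.hyps] by simp
  have c0: "c 0 = 1" "b 0 = 1" unfolding b_def c_def using EE_0 insert.hyps by auto
  have bpos: "\<And>k. b k \<ge> 1" unfolding b_def using EE_pos[OF insert.hyps(1) R insert.prems(2)] by simp
  have IHb: "\<And>k. b k * b (Suc (Suc k)) \<le> (b (Suc k))^2 \<and> (Suc k < card R \<longrightarrow> b k * b (Suc (Suc k)) < (b (Suc k))^2)"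
    using IH unfolding b_def by blast
  have main: "c k * c (Suc (Suc k)) \<le> (c (Suc k))^2 \<and> (Suc k < card (insert i R) \<longrightarrow> c k * c (Suc (Suc k)) < (c (Suc k))^2)" for k
  proof (cases k)
    case 0
    have "b 2 \<le> (b 1)^2" using IHb[of 0] c0 by (simp add: numeral_2_eq_2)
    hence "b 2 + q * b 1 < (b 1 + q)^2" using step0 bpos q1 by blast
    hence "c 0 * c 2 < (c 1)^2" using cS[of 1] cS[of 0] c0 by (simp add: numeral_2_eq_2)
    thus ?thesis using 0 by (simp add: numeral_2_eq_2)
  next
    case (Suc k')
    have pos: "b k' > 0" "b (Suc k') > 0" "b (Suc (Suc k')) > 0" "b (Suc (Suc (Suc k'))) > 0"
      using bpos by (auto intro: less_le_trans[OF zero_less_one])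
    have e: "c (Suc k') = b (Suc k') + q * b k'" "c (Suc (Suc k')) = b (Suc (Suc k')) + q * b (Suc k')"
       "c (Suc (Suc (Suc k'))) = b (Suc (Suc (Suc k'))) + q * b (Suc (Suc k'))" using cS by auto
    have cR: "card (insert i R) = Suc (card R)" using insert.hyps by simp
    show ?thesis using step_ineq[OF pos q1, OF conjunct1[OF IHb[of k']] conjunct1[OF IHb[of "Suc k'"]]]
        IHb[of k'] Suc e cR by auto
  qed
  show ?case using main unfolding c_def by blast
qed

lemma LC_chain:
  fixes E :: "nat \<Rightarrow> real"
  assumes pos: "\<And>k. E k > 0"
    and lc: "\<And>k. Suc k < t \<Longrightarrow> E k * E (Suc (Suc k)) < (E (Suc k))^2"
  shows "m + Suc j < t \<Longrightarrow> E m * E (m + Suc (Suc j)) < E (Suc m) * E (m + Suc j)"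
proof (induction j)
  case 0
  thus ?case using lc[of m] by (simp add: power2_eq_square)
next
  case (Suc j)
  have h1: "E m * E (m + Suc (Suc j)) < E (Suc m) * E (m + Suc j)" using Suc by simp
  have h2: "E (m + Suc j) * E (m + Suc (Suc (Suc j))) < E (m + Suc (Suc j)) * E (m + Suc (Suc j))"
    using lc[of "m + Suc j"] Suc.prems by (simp add: power2_eq_square)
  have "(E m * E (m + Suc (Suc j))) * (E (m + Suc j) * E (m + Suc (Suc (Suc j))))
        < (E (Suc m) * E (m + Suc j)) * (E (m + Suc (Suc j)) * E (m + Suc (Suc j)))"
    by (rule mult_strict_mono[OF h1 h2]) (simp_all add: pos less_imp_le)
  hence "(E m * E (m + Suc (Suc (Suc j)))) * (E (m + Suc j) * E (m + Suc (Suc j)))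
        < (E (Suc m) * E (m + Suc (Suc j))) * (E (m + Suc j) * E (m + Suc (Suc j)))"
    by (simp add: algebra_simps)
  hence "E m * E (m + Suc (Suc (Suc j))) < E (Suc m) * E (m + Suc (Suc j))"
    using pos by (meson mult_less_cancel_right_pos mult_pos_pos)
  thus ?case by simp
qed



lemma swap_ineq:
  assumes R: "finite R" "R \<subseteq> {1..n}" and sv: "size_vector n p" and ij: "i \<notin> R" "j \<notin> R"
    and pij: "p j < p i" "2 \<le> p j" and k: "k \<le> card R"
  shows "real (EE p (insert i R) k) * real (p j) < real (EE p (insert j R) k) * real (p i)"
proof (cases k)
  case 0
  thus ?thesis using EE_0 R pij by simp
next
  case (Suc k')
  have lt: "EE p R k' < EE p R (Suc k')" using EE_strict[OF R sv] k Suc by simp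
  define b0 where "b0 = real (EE p R k')"
  define b1 where "b1 = real (EE p R (Suc k'))"
  have ei: "real (EE p (insert i R) k) = b1 + (real (p i) - 1) * b0"
    using EE_insert[OF R(1) ij(1)] Suc pij unfolding b0_def b1_def by (simp add: of_nat_diff)
  have ej: "real (EE p (insert j R) k) = b1 + (real (p j) - 1) * b0"
    using EE_insert[OF R(1) ij(2)] Suc pij unfolding b0_def b1_def by (simp add: of_nat_diff)
  have id: "(b1 + (real (p j) - 1) * b0) * real (p i) - (b1 + (real (p i) - 1) * b0) * real (p j)
      = (real (p i) - real (p j)) * (b1 - b0)" by (simp add: algebra_simps)
  have "0 < (real (p i) - real (p j)) * (b1 - b0)" using lt pij unfolding b0_def b1_def by simp
  thus ?thesis unfolding ei ej using id by linarith
qed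

lemma real_prod_strict:
  fixes a b c d :: real
  assumes "0 < a" "a < b" "0 < c" "c < d"
  shows "a * c < b * d"
  using assms by (intro mult_strict_mono) auto



theorem theorem4:
  fixes n r :: nat and p :: "nat \<Rightarrow> nat" and A B :: "(nat \<Rightarrow> nat) set"
  assumes "1 \<le> r" and "r \<le> n"
    and "size_vector n p"
    and max: "maximal_pair n p r A B"
  shows "(\<forall>B'. maximal_pair n p r A B' \<longrightarrow> B' = B)
       \<and> (\<forall>A'. maximal_pair n p r A' B \<longrightarrow> A' = A)
       \<and> relevant_coords n p A = relevant_coords n p B
       \<and> (\<forall>T x0 l. T \<subseteq> {1..n} \<longrightarrow> x0 \<in> Sp n p \<longrightarrow> l \<le> card T \<longrightarrow>
            A = hamming_ball n p T x0 l \<longrightarrow>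
              card T \<ge> l + r
            \<and> B = hamming_ball n p T x0 (card T - l - r)
            \<and> (\<forall>i\<in>T. \<forall>j\<in>{1..n} - T. p i \<le> p j)
            \<and> \<bar>int (card T) - 2 * int l - int r\<bar> \<le> 1)"
proof -
  note r1 = assms(1) and rn = assms(2) and sv = assms(3)
  have BN: "B = NB n r p A" using max_N[OF max sv rn] .
  have AN: "A = NB n r p B" using max_N[OF max_sym[OF max] sv rn] .
  have AS: "A \<subseteq> Sp n p" and BS: "B \<subseteq> Sp n p" and cross: "r_cross_intersecting n r A B"
    using max unfolding maximal_pair_def by auto
  have maxle: "\<And>A' B'. A' \<subseteq> Sp n p \<Longrightarrow> B' \<subseteq> Sp n p \<Longrightarrow> r_cross_intersecting n r A' B' \<Longrightarrow>
        card A' * card B' \<le> card A * card B" using max unfolding maximal_pair_def by blast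
  have P1: "\<forall>B'. maximal_pair n p r A B' \<longrightarrow> B' = B" using BN max_N sv rn by metis
  have P2: "\<forall>A'. maximal_pair n p r A' B \<longrightarrow> A' = A" using AN max_N max_sym sv rn by metis
  have P3: "relevant_coords n p A = relevant_coords n p B"
  proof -
    have "irrelevant_coord n p A i = irrelevant_coord n p B i" if "i \<in> {1..n}" for i
      using irr_N[OF AS sv that, of r] irr_N[OF BS sv that, of r] BN AN by metis
    thus ?thesis unfolding relevant_coords_def by auto
  qed
  have P4: "card T \<ge> l + r
            \<and> B = hamming_ball n p T x0 (card T - l - r)
            \<and> (\<forall>i\<in>T. \<forall>j\<in>{1..n} - T. p i \<le> p j)
            \<and> \<bar>int (card T) - 2 * int l - int r\<bar> \<le> 1"
    if T: "T \<subseteq> {1..n}" and x0: "x0 \<in> Sp n p" and lT: "l \<le> card T" and Aeq: "A = hamming_ball n p T x0 l" for T x0 l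
  proof -
    have fT: "finite T" using T finite_subset by blast
    have Bc: "B = {y\<in>Sp n p. card {i\<in>T. y i \<noteq> x0 i} + l + r \<le> card T}"
    proof (intro equalityI subsetI)
      fix y assume y: "y \<in> B"
      have "\<forall>x\<in>hamming_ball n p T x0 l. r_intersecting n r x y" using cross y Aeq
        unfolding r_cross_intersecting_def by auto
      thus "y \<in> {y\<in>Sp n p. card {i\<in>T. y i \<noteq> x0 i} + l + r \<le> card T}"
        using N_ball[OF T x0 sv r1] y BS by auto
    next
      fix y assume y: "y \<in> {y\<in>Sp n p. card {i\<in>T. y i \<noteq> x0 i} + l + r \<le> card T}"
      have "\<forall>x\<in>A. r_intersecting n r x y"
        using ball_int[OF T, of _ x0 l y "card {i\<in>T. y i \<noteq> x0 i}" r] y Aeq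
        unfolding hamming_ball_def by auto
      thus "y \<in> B" using BN y unfolding NB_def by auto
    qed
    have ge: "l + r \<le> card T"
    proof (rule ccontr)
      assume "\<not> ?thesis"
      hence "B = {}" using Bc by auto
      thus False using max_pos[OF max sv rn] by simp
    qed
    define t where "t = card T"
    define m where "m = t - l - r"
    have lmr: "l + m + r = t" unfolding m_def t_def using ge by simp
    have Bball: "B = hamming_ball n p T x0 m" unfolding Bc hamming_ball_def m_def t_def using ge by auto
    have comp: "card (hamming_ball n p T' x0 l') * card (hamming_ball n p T' x0 m') \<le> card A * card B"
      if T': "T' \<subseteq> {1..n}" and lm': "l' + m' + r \<le> card T'" for T' l' m'
    proof (rule maxle)
      show "hamming_ball n p T' x0 l' \<subseteq> Sp n p" "hamming_ball n p T' x0 m' \<subseteq> Sp n p"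
        unfolding hamming_ball_def by auto
      show "r_cross_intersecting n r (hamming_ball n p T' x0 l') (hamming_ball n p T' x0 m')"
        unfolding r_cross_intersecting_def hamming_ball_def using ball_int[OF T' _ _ lm'] by auto
    qed
    define P where "P = (\<Prod>i\<in>{1..n}-T. p i)"
    have Ppos: "P \<ge> 1" unfolding P_def using sv unfolding size_vector_def
      by (intro prod_ge_1) force
    have cAB: "card A * card B = EE p T l * EE p T m * P * P"
      using card_ball[OF T x0] Aeq Bball unfolding P_def by simp
    have mono: "\<forall>i\<in>T. \<forall>j\<in>{1..n} - T. p i \<le> p j"
    proof (intro ballI, rule ccontr)
      fix i j assume iT: "i \<in> T" and jO: "j \<in> {1..n} - T" and "\<not> p i \<le> p j"
      hence pij: "p j < p i" by simp
      have pj2: "2 \<le> p j" using jO sv unfolding size_vector_def by auto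
      define R where "R = T - {i}"
      define T' where "T' = insert j R"
      have fR: "finite R" "R \<subseteq> {1..n}" unfolding R_def using fT T by auto
      have iR: "i \<notin> R" "j \<notin> R" unfolding R_def using jO by auto
      have TR: "T = insert i R" unfolding R_def using iT by auto
      have cR: "card T = Suc (card R)" using TR fR iR by simp
      have cT': "card T' = card T" unfolding T'_def using cR fR iR by simp
      have T'sub: "T' \<subseteq> {1..n}" unfolding T'_def using fR jO by auto
      define Q where "Q = (\<Prod>k\<in>{1..n}-T-{j}. p k)"
      have Qpos: "Q \<ge> 1" unfolding Q_def using sv unfolding size_vector_def by (intro prod_ge_1) force
      have e1: "{1..n} - T = insert j ({1..n}-T-{j})" using jO by auto
      have e2: "{1..n} - T' = insert i ({1..n}-T-{j})" unfolding T'_def R_def using iT T jO by auto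
      have PT: "(\<Prod>k\<in>{1..n}-T. p k) = p j * Q" unfolding Q_def
        by (subst e1, subst prod.insert) auto
      have PT': "(\<Prod>k\<in>{1..n}-T'. p k) = p i * Q" unfolding Q_def
        using iT by (subst e2, subst prod.insert) auto
      have key: "real (EE p T k) * real (p j) < real (EE p T' k) * real (p i)" if "k \<le> card R" for k
        using swap_ineq[OF fR sv iR pij pj2 that] unfolding TR T'_def by simp
      have lR: "l \<le> card R" "m \<le> card R" using lmr cR r1 unfolding t_def by auto
      have ca: "real (card (hamming_ball n p T x0 k)) = real (EE p T k) * real (p j) * real Q" for k
        using card_ball[OF T x0, of k] PT by simp
      have cb: "real (card (hamming_ball n p T' x0 k)) = real (EE p T' k) * real (p i) * real Q" for k
        using card_ball[OF T'sub x0, of k] PT' by simp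
      have pos: "0 < real (EE p T k) * real (p j) * real Q" for k
        using EE_pos[OF fT T sv, of k] pj2 Qpos by simp
      have "real (card A) * real (card B) < real (card (hamming_ball n p T' x0 l)) * real (card (hamming_ball n p T' x0 m))"
        unfolding Aeq Bball ca cb
        using real_prod_strict[OF pos[of l] _ pos[of m]] key[OF lR(1)] key[OF lR(2)] Qpos
        by (simp add: mult_strict_right_mono)
      moreover have "card (hamming_ball n p T' x0 l) * card (hamming_ball n p T' x0 m) \<le> card A * card B"
        using comp[OF T'sub] lmr cT' unfolding t_def by simp
      ultimately show False by (metis not_le of_nat_less_iff of_nat_mult)
    qed
    define E where "E k = real (EE p T k)" for k
    have Epos: "\<And>k. E k > 0" unfolding E_def using EE_pos[OF fT T sv] by (simp add: Suc_le_eq)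
    have Elc: "\<And>k. Suc k < t \<Longrightarrow> E k * E (Suc (Suc k)) < (E (Suc k))^2"
      using LC[OF fT T sv] unfolding E_def t_def by blast
    have Pr: "real P > 0" using Ppos by simp
    have cAB': "real (card A * card B) = E l * E m * real P * real P" using cAB unfolding E_def by simp
    have cmp: "real (card (hamming_ball n p T x0 l') * card (hamming_ball n p T x0 m')) = E l' * E m' * real P * real P" for l' m'
      using card_ball[OF T x0] unfolding E_def P_def by simp
    have bal1: False if "m + 2 \<le> l"
    proof -
      define j where "j = l - m - 2"
      have j: "l = m + Suc (Suc j)" using that unfolding j_def by simp
      have "E m * E l < E (Suc m) * E (m + Suc j)" using LC_chain[where E=E and t=t and m=m and j=j, OF Epos Elc] j lmr r1 by simp
      hence "(E m * E l) * (real P * real P) < (E (Suc m) * E (m + Suc j)) * (real P * real P)"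
        using Pr by (intro mult_strict_right_mono) auto
      hence "E l * E m * real P * real P < E (m + Suc j) * E (Suc m) * real P * real P"
        by (simp only: ac_simps)
      moreover have "card (hamming_ball n p T x0 (m + Suc j)) * card (hamming_ball n p T x0 (Suc m)) \<le> card A * card B"
        using comp[OF T] j lmr unfolding t_def by simp
      hence "real (card (hamming_ball n p T x0 (m + Suc j)) * card (hamming_ball n p T x0 (Suc m))) \<le> real (card A * card B)"
        by (simp only: of_nat_le_iff)
      ultimately show False unfolding cAB' cmp by linarith
    qed
    have bal2: False if "l + 2 \<le> m"
    proof -
      define j where "j = m - l - 2"
      have j: "m = l + Suc (Suc j)" using that unfolding j_def by simp
      have "E l * E m < E (Suc l) * E (l + Suc j)" using LC_chain[where E=E and t=t and m=l and j=j, OF Epos Elc] j lmr r1 by simp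
      hence "(E l * E m) * (real P * real P) < (E (Suc l) * E (l + Suc j)) * (real P * real P)"
        using Pr by (intro mult_strict_right_mono) auto
      hence "E l * E m * real P * real P < E (Suc l) * E (l + Suc j) * real P * real P"
        by (simp only: ac_simps)
      moreover have "card (hamming_ball n p T x0 (Suc l)) * card (hamming_ball n p T x0 (l + Suc j)) \<le> card A * card B"
        using comp[OF T] j lmr unfolding t_def by simp
      hence "real (card (hamming_ball n p T x0 (Suc l)) * card (hamming_ball n p T x0 (l + Suc j))) \<le> real (card A * card B)"
        by (simp only: of_nat_le_iff)
      ultimately show False unfolding cAB' cmp by linarith
    qed
    have c1: "l < m + 2" using bal1 by force
    have c2: "m < l + 2" using bal2 by force
    have ci: "int (card T) = int l + int m + int r" using lmr unfolding t_def by simp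
    have "\<bar>int (card T) - 2 * int l - int r\<bar> \<le> 1"
      unfolding ci abs_le_iff using c1 c2 by linarith
    thus ?thesis using ge Bball mono unfolding m_def t_def by blast
  qed
  show ?thesis using P1 P2 P3 P4 by blast
qed

end
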